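(* Let $S$ be a Hausdorff semitopological semigroup which is algebraically a primitive inverse semigroup, $S=\sum_{i\in\mathscr I}B_{\lambda_i}(G_i)$. Then: (i) for every $i\in\mathscr I$, $\alpha_i,\beta_i\in\lambda_i$ and every $(\alpha_i,g_i,\beta_i)\in(G_i)_{\alpha_i,\beta_i}$ there exists an open neighbourhood $U$ of $(\alpha_i,g_i,\beta_i)$ in $S$ with $U\subseteq (G_i)_{\alpha_i,\beta_i}$; hence every set $(G_i)_{\alpha_i,\beta_i}$ is open in $S$; (ii) every non-zero idempotent of $S$ is an isolated point of the subspace $E(S)$ of idempotents.
   Context: All spaces are Hausdorff; a semitopological semigroup is a Hausdorff space with separately continuous associative operation. For a group $G$ and a cardinal $\lambda\ge1$, the Brandt semigroup $B_\lambda(G)$ is $(\lambda\times G\times\lambda)\cup\{0\}$ with $(\alpha,a,\beta)(\gamma,b,\delta)=(\alpha,ab,\delta)$ if $\beta=\gamma$ and $0$ otherwise, $0$ being zero. The orthogonal sum of semigroups $T_\iota$ with zeros is $\{0\}\cup\bigcup_\iota(T_\iota\setminus\{0_\iota\})$ with products computed in $T_\iota$ when both factors lie in the same $T_\iota$ and the product is non-zero, and equal to $0$ otherwise. A primitive inverse semigroup is (up to isomorphism) exactly an orthogonal sum $\sum_{i\in\mathscr I}B_{\lambda_i}(G_i)$ of Brandt semigroups; we identify each $B_{\lambda_i}(G_i)$ with a subsemigroup of $S$ and write $(G_i)_{\alpha,\beta}=\{(\alpha,g,\beta):g\in G_i\}$ for $\alpha,\beta\in\lambda_i$. *)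

theory Defs
  imports "HOL-Analysis.Analysis" "HOL-Algebra.Group"
begin

text \<open>Elements of the orthogonal sum of Brandt semigroups B_{lambda_i}(G_i), i in I:
  the zero, or a triple (alpha, g, beta) tagged with its summand index i.\<close>
datatype ('i, 'a, 'g) bsum_elt = BZero | BElt 'i 'a 'g 'a

definition bsum_carrier ::
  "'i set \<Rightarrow> ('i \<Rightarrow> 'a set) \<Rightarrow> ('i \<Rightarrow> 'g monoid) \<Rightarrow> ('i, 'a, 'g) bsum_elt set" where
  "bsum_carrier I Lam G =
     insert BZero {BElt i \<alpha> g \<beta> | i \<alpha> g \<beta>. i \<in> I \<and> \<alpha> \<in> Lam i \<and> \<beta> \<in> Lam i \<and> g \<in> carrier (G i)}"

fun bsum_mult ::
  "('i \<Rightarrow> 'g monoid) \<Rightarrow> ('i, 'a, 'g) bsum_elt \<Rightarrow> ('i, 'a, 'g) bsum_elt \<Rightarrow> ('i, 'a, 'g) bsum_elt" where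
  "bsum_mult G (BElt i \<alpha> a \<beta>) (BElt j \<gamma> b \<delta>) =
     (if i = j \<and> \<beta> = \<gamma> then BElt i \<alpha> (a \<otimes>\<^bsub>G i\<^esub> b) \<delta> else BZero)"
| "bsum_mult G _ _ = BZero"

definition bsum_block ::
  "('i \<Rightarrow> 'g monoid) \<Rightarrow> 'i \<Rightarrow> 'a \<Rightarrow> 'a \<Rightarrow> ('i, 'a, 'g) bsum_elt set" where
  "bsum_block G i \<alpha> \<beta> = {BElt i \<alpha> g \<beta> | g. g \<in> carrier (G i)}"

definition bsum_idempotents ::
  "'i set \<Rightarrow> ('i \<Rightarrow> 'a set) \<Rightarrow> ('i \<Rightarrow> 'g monoid) \<Rightarrow> ('i, 'a, 'g) bsum_elt set" where
  "bsum_idempotents I Lam G = {e \<in> bsum_carrier I Lam G. bsum_mult G e e = e}"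

definition semitop_bsum ::
  "'i set \<Rightarrow> ('i \<Rightarrow> 'a set) \<Rightarrow> ('i \<Rightarrow> 'g monoid) \<Rightarrow> ('i, 'a, 'g) bsum_elt topology \<Rightarrow> bool" where
  "semitop_bsum I Lam G T \<longleftrightarrow>
     topspace T = bsum_carrier I Lam G \<and> Hausdorff_space T \<and>
     (\<forall>s \<in> bsum_carrier I Lam G.
        continuous_map T T (\<lambda>x. bsum_mult G s x) \<and> continuous_map T T (\<lambda>x. bsum_mult G x s))"

end

theory Submission
  imports Defs
begin

lemma h_block:
  assumes "bsum_mult G (bsum_mult G (BElt i \<alpha> u \<alpha>) s) (BElt i \<beta> v \<beta>) \<noteq> BZero"
    and "s \<in> bsum_carrier I Lam G"
  shows "s \<in> bsum_block G i \<alpha> \<beta>"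
proof -
  obtain j a g b where s: "s = BElt j a g b" "g \<in> carrier (G j)"
    using assms(2) assms(1) unfolding bsum_carrier_def by auto
  show ?thesis using assms(1) s unfolding bsum_block_def
    by (auto split: if_splits)
qed

lemma part1:
  assumes groups: "\<forall>i \<in> I. group (G i)"
    and semitop: "semitop_bsum I Lam G T"
    and i: "i \<in> I" "\<alpha> \<in> Lam i" "\<beta> \<in> Lam i" "g \<in> carrier (G i)"
  shows "\<exists>U. openin T U \<and> BElt i \<alpha> g \<beta> \<in> U \<and> U \<subseteq> bsum_block G i \<alpha> \<beta>"
proof -
  interpret group "G i" using groups i by auto
  let ?e = "BElt i \<alpha> \<one>\<^bsub>G i\<^esub> \<alpha>"
  let ?f = "BElt i \<beta> \<one>\<^bsub>G i\<^esub> \<beta>"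
  let ?x = "BElt i \<alpha> g \<beta>"
  have top: "topspace T = bsum_carrier I Lam G" and H: "Hausdorff_space T"
    using semitop unfolding semitop_bsum_def by auto
  have ec: "?e \<in> bsum_carrier I Lam G" and fc: "?f \<in> bsum_carrier I Lam G"
    and xc: "?x \<in> bsum_carrier I Lam G"
    using i unfolding bsum_carrier_def by auto
  have c1: "continuous_map T T (\<lambda>x. bsum_mult G ?e x)"
    and c2: "continuous_map T T (\<lambda>x. bsum_mult G x ?f)"
    using semitop ec fc unfolding semitop_bsum_def by auto
  have c: "continuous_map T T (\<lambda>x. bsum_mult G (bsum_mult G ?e x) ?f)"
    using continuous_map_compose[OF c1 c2] by (simp add: o_def)
  have zc: "BZero \<in> topspace T" using top unfolding bsum_carrier_def by auto
  obtain U V where UV: "openin T U" "openin T V" "?x \<in> U" "BZero \<in> V" "disjnt U V"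
    using H xc zc top unfolding Hausdorff_space_def by (metis bsum_elt.distinct(2))
  have zU: "BZero \<notin> U" using UV by (auto simp: disjnt_def)
  define W where "W = {s \<in> topspace T. bsum_mult G (bsum_mult G ?e s) ?f \<in> U}"
  have "openin T W" unfolding W_def using openin_continuous_map_preimage[OF c UV(1)] .
  moreover have "?x \<in> W" unfolding W_def using xc top UV(3) i by simp
  moreover have "W \<subseteq> bsum_block G i \<alpha> \<beta>"
  proof
    fix s assume "s \<in> W"
    then have "bsum_mult G (bsum_mult G ?e s) ?f \<noteq> BZero" "s \<in> bsum_carrier I Lam G"
      using zU top unfolding W_def by auto
    then show "s \<in> bsum_block G i \<alpha> \<beta>" by (rule h_block)
  qed
  ultimately show ?thesis by blast
qed

theorem corollary2p3:
  fixes I :: "'i set" and Lam :: "'i \<Rightarrow> 'a set" and G :: "'i \<Rightarrow> 'g monoid"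
    and T :: "('i, 'a, 'g) bsum_elt topology"
  assumes groups: "\<forall>i \<in> I. group (G i)"
    and nonempty: "\<forall>i \<in> I. Lam i \<noteq> {}"
    and semitop: "semitop_bsum I Lam G T"
  shows "(\<forall>i \<in> I. \<forall>\<alpha> \<in> Lam i. \<forall>\<beta> \<in> Lam i. \<forall>g \<in> carrier (G i).
            \<exists>U. openin T U \<and> BElt i \<alpha> g \<beta> \<in> U \<and> U \<subseteq> bsum_block G i \<alpha> \<beta>)
       \<and> (\<forall>i \<in> I. \<forall>\<alpha> \<in> Lam i. \<forall>\<beta> \<in> Lam i. openin T (bsum_block G i \<alpha> \<beta>))
       \<and> (\<forall>e \<in> bsum_idempotents I Lam G. e \<noteq> BZero \<longrightarrow>
            (\<exists>U. openin T U \<and> U \<inter> bsum_idempotents I Lam G = {e}))"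
proof (intro conjI ballI impI)
  fix i \<alpha> \<beta> g assume "i \<in> I" "\<alpha> \<in> Lam i" "\<beta> \<in> Lam i" "g \<in> carrier (G i)"
  then show "\<exists>U. openin T U \<and> BElt i \<alpha> g \<beta> \<in> U \<and> U \<subseteq> bsum_block G i \<alpha> \<beta>"
    using part1[OF groups semitop] by blast
next
  fix i \<alpha> \<beta> assume i: "i \<in> I" "\<alpha> \<in> Lam i" "\<beta> \<in> Lam i"
  show "openin T (bsum_block G i \<alpha> \<beta>)"
  proof (subst openin_subopen, intro ballI)
    fix x assume "x \<in> bsum_block G i \<alpha> \<beta>"
    then obtain g where "x = BElt i \<alpha> g \<beta>" "g \<in> carrier (G i)"
      unfolding bsum_block_def by auto
    then show "\<exists>U. openin T U \<and> x \<in> U \<and> U \<subseteq> bsum_block G i \<alpha> \<beta>"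
      using part1[OF groups semitop i] by blast
  qed
next
  fix e assume e: "e \<in> bsum_idempotents I Lam G" "e \<noteq> BZero"
  then obtain i \<alpha> g \<beta> where eq: "e = BElt i \<alpha> g \<beta>" and i: "i \<in> I" "\<alpha> \<in> Lam i" "\<beta> \<in> Lam i"
      "g \<in> carrier (G i)"
    unfolding bsum_idempotents_def bsum_carrier_def by auto
  interpret group "G i" using groups i by auto
  obtain U where U: "openin T U" "e \<in> U" "U \<subseteq> bsum_block G i \<alpha> \<beta>"
    using part1[OF groups semitop i] eq by blast
  have "U \<inter> bsum_idempotents I Lam G = {e}"
  proof
    show "{e} \<subseteq> U \<inter> bsum_idempotents I Lam G" using U e by auto
  next
    show "U \<inter> bsum_idempotents I Lam G \<subseteq> {e}"
    proof
      fix y assume y: "y \<in> U \<inter> bsum_idempotents I Lam G"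
      then obtain h where yh: "y = BElt i \<alpha> h \<beta>" "h \<in> carrier (G i)"
        using U unfolding bsum_block_def by auto
      have "bsum_mult G y y = y" using y unfolding bsum_idempotents_def by auto
      then have ab: "\<alpha> = \<beta>" and hh: "h \<otimes>\<^bsub>G i\<^esub> h = h"
        using yh by (auto split: if_splits)
      have "h = \<one>\<^bsub>G i\<^esub>" using hh yh(2) using l_cancel_one by blast
      have "bsum_mult G e e = e" using e unfolding bsum_idempotents_def by auto
      then have "g \<otimes>\<^bsub>G i\<^esub> g = g" using eq by (auto split: if_splits)
      then have "g = \<one>\<^bsub>G i\<^esub>" using i(4) using l_cancel_one by blast
      then show "y \<in> {e}" using eq yh \<open>h = \<one>\<^bsub>G i\<^esub>\<close> by simp
    qed
  qed
  then show "\<exists>U. openin T U \<and> U \<inter> bsum_idempotents I Lam G = {e}" using U by blast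
qed

end
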